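(* Let $\alpha$ be a reduced operation sequence and $\lambda$ a push operation of $\alpha$. If the pop operations of $\alpha$ corresponding to $\lambda$ do not occupy a set of consecutive positions of $\alpha$ (i.e. they do not form a subword), then $\lambda$ is fixed.
   Context: Operation sequences: $\sigma[a]$ ($a\ge1$) denotes pushing the top $a$ elements of the input stack, as a block with relative order unchanged, onto the top of a working stack; $\tau[b]$ ($b\ge1$) denotes moving the top $b$ elements of the working stack, as a block with relative order unchanged, onto the top of an output stack; $\sigma=\sigma[1]$, $\tau=\tau[1]$. A well-formed operation sequence is a word $\alpha=\alpha_1\cdots\alpha_m$ in these symbols such that in every prefix the total push size is at least the total pop size, with equality for the whole word; its size $n$ is the total push size. Acting on an input stack containing $1,\dots,n$ with $1$ on top, it produces the permutation read from the final output stack top to bottom. Two well-formed sequences are equivalent if they have the same size and produce the same permutation. $\alpha$ is reduced if every consecutive pair $\alpha_i\alpha_{i+1}$ with $\alpha_i$ a push and $\alpha_{i+1}$ a pop equals $\sigma[1]\tau[1]$. The vertices of $\alpha$ are $v_0=(0,0)$ and $v_i=v_{i-1}+(a,a)$ if $\alpha_i=\sigma[a]$, $v_i=v_{i-1}+(b,-b)$ if $\alpha_i=\tau[b]$. The support of a push (resp. pop) is the set of elements it places on (resp. removes from) the working stack when $\alpha$ acts on input $1,\dots,n$. A push and a pop correspond if their supports intersect. An operation $\alpha_i$ of a reduced sequence $\alpha$ is fixed if for every reduced sequence $\beta=\beta_1\cdots\beta_{m'}$ equivalent to $\alpha$, with vertices $w_0,\dots,w_{m'}$, there is $j$ with $w_{j-1}=v_{i-1}$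 and $w_j=v_i$. *)

theory Defs
  imports Main
begin

(* sigma[a] = Push a, tau[b] = Pop b *)
datatype op = Push nat | Pop nat

type_synonym opseq = "op list"

(* state: (input stack, working stack, output stack); list head = top of stack *)
type_synonym state = "nat list \<times> nat list \<times> nat list"

fun is_push :: "op \<Rightarrow> bool" where
  "is_push (Push a) = True" | "is_push (Pop b) = False"

fun opsize :: "op \<Rightarrow> nat" where
  "opsize (Push a) = a" | "opsize (Pop b) = b"

fun push_amt :: "op \<Rightarrow> nat" where
  "push_amt (Push a) = a" | "push_amt (Pop b) = 0"

fun pop_amt :: "op \<Rightarrow> nat" where
  "pop_amt (Push a) = 0" | "pop_amt (Pop b) = b"

definition total_push :: "opseq \<Rightarrow> nat" where
  "total_push xs = sum_list (map push_amt xs)"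

definition total_pop :: "opseq \<Rightarrow> nat" where
  "total_pop xs = sum_list (map pop_amt xs)"

definition well_formed :: "opseq \<Rightarrow> bool" where
  "well_formed xs \<longleftrightarrow> (\<forall>x\<in>set xs. opsize x \<ge> 1)
     \<and> (\<forall>k \<le> length xs. total_pop (take k xs) \<le> total_push (take k xs))
     \<and> total_pop xs = total_push xs"

definition seq_size :: "opseq \<Rightarrow> nat" where
  "seq_size xs = total_push xs"

fun exec_op :: "op \<Rightarrow> state \<Rightarrow> state" where
  "exec_op (Push a) (inp, wk, out) = (drop a inp, take a inp @ wk, out)"
| "exec_op (Pop b) (inp, wk, out) = (inp, drop b wk, take b wk @ out)"

definition init_state :: "nat \<Rightarrow> state" where
  "init_state n = ([1..<n+1], [], [])"

definition state_after :: "opseq \<Rightarrow> nat \<Rightarrow> state" where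
  "state_after xs k = fold exec_op (take k xs) (init_state (seq_size xs))"

(* produced permutation: final output stack read top to bottom *)
definition produced :: "opseq \<Rightarrow> nat list" where
  "produced xs = snd (snd (state_after xs (length xs)))"

definition equivalent :: "opseq \<Rightarrow> opseq \<Rightarrow> bool" where
  "equivalent xs ys \<longleftrightarrow> well_formed xs \<and> well_formed ys
     \<and> seq_size xs = seq_size ys \<and> produced xs = produced ys"

definition reduced :: "opseq \<Rightarrow> bool" where
  "reduced xs \<longleftrightarrow> (\<forall>i. Suc i < length xs \<longrightarrow> is_push (xs!i) \<longrightarrow> \<not> is_push (xs!Suc i)
        \<longrightarrow> xs!i = Push 1 \<and> xs!Suc i = Pop 1)"

fun dvec :: "op \<Rightarrow> int \<times> int" where
  "dvec (Push a) = (int a, int a)" | "dvec (Pop b) = (int b, - int b)"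

definition vertex :: "opseq \<Rightarrow> nat \<Rightarrow> int \<times> int" where
  "vertex xs k = (sum_list (map (fst \<circ> dvec) (take k xs)), sum_list (map (snd \<circ> dvec) (take k xs)))"

(* support of the operation at 0-based position i (the paper's alpha_{i+1}) *)
definition support :: "opseq \<Rightarrow> nat \<Rightarrow> nat set" where
  "support xs i = (case state_after xs i of (inp, wk, out) \<Rightarrow>
      (case xs!i of Push a \<Rightarrow> set (take a inp) | Pop b \<Rightarrow> set (take b wk)))"

definition corr_pops :: "opseq \<Rightarrow> nat \<Rightarrow> nat set" where
  "corr_pops xs i = {j. j < length xs \<and> \<not> is_push (xs!j) \<and> support xs j \<inter> support xs i \<noteq> {}}"

definition fixed_op :: "opseq \<Rightarrow> nat \<Rightarrow> bool" where
  "fixed_op xs i \<longleftrightarrow> (\<forall>ys. reduced ys \<and> equivalent ys xs \<longrightarrow>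
      (\<exists>j < length ys. vertex ys j = vertex xs i \<and> vertex ys (Suc j) = vertex xs (Suc i)))"

end

theory Submission
  imports Defs
begin


definition tpu :: "opseq \<Rightarrow> nat \<Rightarrow> nat" where "tpu s k = total_push (take k s)"
definition tpo :: "opseq \<Rightarrow> nat \<Rightarrow> nat" where "tpo s k = total_pop (take k s)"
definition wkk :: "opseq \<Rightarrow> nat \<Rightarrow> nat list" where "wkk s k = fst (snd (state_after s k))"
definition outk :: "opseq \<Rightarrow> nat \<Rightarrow> nat list" where "outk s k = snd (snd (state_after s k))"
definition inpk :: "opseq \<Rightarrow> nat \<Rightarrow> nat list" where "inpk s k = fst (state_after s k)"

lemma total_push_append[simp]: "total_push (a @ b) = total_push a + total_push b"
  by (simp add: total_push_def)
lemma total_pop_append[simp]: "total_pop (a @ b) = total_pop a + total_pop b"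
  by (simp add: total_pop_def)
lemma total_push_single[simp]: "total_push [x] = push_amt x" by (simp add: total_push_def)
lemma total_pop_single[simp]: "total_pop [x] = pop_amt x" by (simp add: total_pop_def)

lemma tpu_Suc: "k < length s \<Longrightarrow> tpu s (Suc k) = tpu s k + push_amt (s!k)"
  by (simp add: tpu_def take_Suc_conv_app_nth)
lemma tpo_Suc: "k < length s \<Longrightarrow> tpo s (Suc k) = tpo s k + pop_amt (s!k)"
  by (simp add: tpo_def take_Suc_conv_app_nth)

lemma tpu_mono: "k \<le> k' \<Longrightarrow> tpu s k \<le> tpu s k'"
proof -
  assume "k \<le> k'"
  then obtain d where "k' = k + d" using le_Suc_ex by blast
  then show ?thesis by (simp add: tpu_def take_add)
qed
lemma tpo_mono: "k \<le> k' \<Longrightarrow> tpo s k \<le> tpo s k'"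
proof -
  assume "k \<le> k'"
  then obtain d where "k' = k + d" using le_Suc_ex by blast
  then show ?thesis by (simp add: tpo_def take_add)
qed

lemma tpu_0[simp]: "tpu s 0 = 0" by (simp add: tpu_def total_push_def)
lemma tpo_0[simp]: "tpo s 0 = 0" by (simp add: tpo_def total_pop_def)
lemma tpu_len: "length s \<le> k \<Longrightarrow> tpu s k = seq_size s" by (simp add: tpu_def seq_size_def)
lemma tpo_len: "length s \<le> k \<Longrightarrow> tpo s k = total_pop s" by (simp add: tpo_def)

lemma state_after_Suc: "k < length s \<Longrightarrow> state_after s (Suc k) = exec_op (s!k) (state_after s k)"
  by (simp add: state_after_def take_Suc_conv_app_nth)

lemma state_after_split: "state_after s k = (inpk s k, wkk s k, outk s k)"
  by (simp add: inpk_def wkk_def outk_def)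

lemma state_after_rest: "k \<le> length s \<Longrightarrow> state_after s (length s) = fold exec_op (drop k s) (state_after s k)"
  by (metis append_take_drop_id fold_append comp_apply state_after_def take_all order_refl)

lemma push_pop_cases: "(\<exists>a. x = Push a) \<or> (\<exists>b. x = Pop b)" by (cases x) auto

definition INV :: "opseq \<Rightarrow> nat \<Rightarrow> bool" where
 "INV s k \<longleftrightarrow> inpk s k = drop (tpu s k) [1..<seq_size s + 1]
    \<and> length (wkk s k) = tpu s k - tpo s k \<and> length (outk s k) = tpo s k
    \<and> tpo s k \<le> tpu s k \<and> tpu s k \<le> seq_size s
    \<and> distinct (wkk s k @ outk s k) \<and> set (wkk s k @ outk s k) = {1..tpu s k}"

lemma wf_prefix: "well_formed s \<Longrightarrow> k \<le> length s \<Longrightarrow> tpo s k \<le> tpu s k"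
  by (simp add: well_formed_def tpo_def tpu_def)

lemma wf_opsize: "well_formed s \<Longrightarrow> k < length s \<Longrightarrow> opsize (s!k) \<ge> 1"
  by (simp add: well_formed_def)

lemma INV_all: assumes wf: "well_formed s" shows "k \<le> length s \<Longrightarrow> INV s k"
proof (induction k)
  case 0
  then show ?case by (simp add: INV_def inpk_def wkk_def outk_def state_after_def init_state_def)
next
  case (Suc k)
  then have kl: "k < length s" by simp
  have IH: "INV s k" using Suc by simp
  have st: "state_after s (Suc k) = exec_op (s!k) (inpk s k, wkk s k, outk s k)"
    using state_after_Suc[OF kl] state_after_split by metis
  have tpn: "tpu s (Suc k) \<le> seq_size s" using tpu_mono[of "Suc k" "length s" s] tpu_len[of s "length s"] Suc by simp
  have pre: "tpo s (Suc k) \<le> tpu s (Suc k)" using wf_prefix[OF wf] Suc by simp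
  consider (pu) a where "s!k = Push a" | (po) b where "s!k = Pop b" using push_pop_cases by blast
  then show ?case
  proof cases
    case pu
    have tu: "tpu s (Suc k) = tpu s k + a" using tpu_Suc[OF kl] pu by simp
    have to: "tpo s (Suc k) = tpo s k" using tpo_Suc[OF kl] pu by simp
    have blk: "take a (drop (tpu s k) [1..<seq_size s + 1]) = [tpu s k + 1..<tpu s k + a + 1]"
    proof -
      have "drop (tpu s k) [1..<seq_size s + 1] = [tpu s k + 1..<seq_size s + 1]" by (simp add: add.commute)
      moreover have "take a [tpu s k + 1..<seq_size s + 1] = [tpu s k + 1..<tpu s k + 1 + a]"
        by (rule take_upt) (use tpn tu in simp)
      ultimately show ?thesis by simp
    qed
    have e1: "inpk s (Suc k) = drop (tpu s (Suc k)) [1..<seq_size s + 1]"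
      using st pu IH tu by (simp add: INV_def inpk_def add.commute)
    have e2: "wkk s (Suc k) = [tpu s k + 1..<tpu s k + a + 1] @ wkk s k"
      using st pu IH blk by (simp add: INV_def wkk_def)
    have e3: "outk s (Suc k) = outk s k" using st pu by (simp add: outk_def)
    define bl where "bl = [tpu s k + 1..<tpu s k + a + 1]"
    have blp: "distinct bl" "set bl = {tpu s k + 1..<tpu s k + a + 1}" "length bl = a"
      unfolding bl_def by (simp_all only: distinct_upt set_upt length_upt)
    have e2': "wkk s (Suc k) = bl @ wkk s k" using e2 bl_def by simp
    have I: "length (wkk s k) = tpu s k - tpo s k" "length (outk s k) = tpo s k" "tpo s k \<le> tpu s k"
      "distinct (wkk s k @ outk s k)" "set (wkk s k @ outk s k) = {1..tpu s k}"
      using IH by (simp_all add: INV_def)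
    have dis: "set bl \<inter> set (wkk s k @ outk s k) = {}"
      using I(5) blp(2) by auto
    have "length (wkk s (Suc k)) = tpu s (Suc k) - tpo s (Suc k)" using e2' blp I tu to by simp
    moreover have "distinct (wkk s (Suc k) @ outk s (Suc k))"
    proof -
      have "distinct (bl @ (wkk s k @ outk s k))" using blp(1) I(4) dis by (simp only: distinct_append)
      then show ?thesis using e2' e3 by simp
    qed
    moreover have "set (wkk s (Suc k) @ outk s (Suc k)) = {1..tpu s (Suc k)}"
    proof -
      have "set (wkk s (Suc k) @ outk s (Suc k)) = set bl \<union> set (wkk s k @ outk s k)"
        using e2' e3 by auto
      also have "\<dots> = {1..tpu s (Suc k)}" using tu blp(2) I(5) by auto
      finally show ?thesis .
    qed
    ultimately show ?thesis unfolding INV_def using e1 e3 I tu to tpn by simp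
  next
    case po
    have tu: "tpu s (Suc k) = tpu s k" using tpu_Suc[OF kl] po by simp
    have to: "tpo s (Suc k) = tpo s k + b" using tpo_Suc[OF kl] po by simp
    have e1: "inpk s (Suc k) = inpk s k" using st po by (simp add: inpk_def)
    have e2: "wkk s (Suc k) = drop b (wkk s k)" using st po by (simp add: wkk_def)
    have e3: "outk s (Suc k) = take b (wkk s k) @ outk s k" using st po by (simp add: outk_def)
    have bl: "b \<le> length (wkk s k)" using IH pre tu to by (simp add: INV_def)
    have d: "distinct (drop b (wkk s k) @ take b (wkk s k) @ outk s k)"
    proof -
      have "distinct (wkk s k @ outk s k)" using IH by (simp add: INV_def)
      then have A: "distinct (wkk s k)" "distinct (outk s k)" "set (wkk s k) \<inter> set (outk s k) = {}" by auto
      have "distinct (take b (wkk s k) @ drop b (wkk s k))" using A(1) by simp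
      then have B: "distinct (take b (wkk s k))" "distinct (drop b (wkk s k))"
         "set (take b (wkk s k)) \<inter> set (drop b (wkk s k)) = {}" by (simp_all only: distinct_append)
      have C: "set (take b (wkk s k)) \<inter> set (outk s k) = {}" "set (drop b (wkk s k)) \<inter> set (outk s k) = {}"
        using A(3) set_take_subset[of b "wkk s k"] set_drop_subset[of b "wkk s k"] by blast+
      show ?thesis using A B C by auto
    qed
    have sset: "set (drop b (wkk s k) @ take b (wkk s k) @ outk s k) = set (wkk s k @ outk s k)"
      by (metis Un_assoc Un_commute append_take_drop_id set_append)
    have I: "length (wkk s k) = tpu s k - tpo s k" "length (outk s k) = tpo s k" "tpo s k \<le> tpu s k"
      "distinct (wkk s k @ outk s k)" "set (wkk s k @ outk s k) = {1..tpu s k}"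
      "inpk s k = drop (tpu s k) [1..<seq_size s + 1]" "tpu s k \<le> seq_size s"
      using IH by (simp_all add: INV_def)
    have "length (wkk s (Suc k)) = tpu s (Suc k) - tpo s (Suc k)" using e2 I tu to by simp
    moreover have "length (outk s (Suc k)) = tpo s (Suc k)" using e3 I bl to by simp
    moreover have "distinct (wkk s (Suc k) @ outk s (Suc k))" using e2 e3 d by simp
    moreover have "set (wkk s (Suc k) @ outk s (Suc k)) = {1..tpu s (Suc k)}" using e2 e3 sset I(5) tu by simp
    ultimately show ?thesis unfolding INV_def using e1 I tu pre by simp
  qed
qed

lemma INV_D: assumes "well_formed s" "k \<le> length s"
  shows "inpk s k = drop (tpu s k) [1..<seq_size s + 1]"
    "length (wkk s k) = tpu s k - tpo s k" "length (outk s k) = tpo s k"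
    "tpo s k \<le> tpu s k" "tpu s k \<le> seq_size s"
    "distinct (wkk s k @ outk s k)" "set (wkk s k @ outk s k) = {1..tpu s k}"
  using INV_all[OF assms] by (simp_all add: INV_def)

lemma wf_total: "well_formed s \<Longrightarrow> total_pop s = seq_size s"
  by (simp add: well_formed_def seq_size_def)

lemma final_wk: assumes "well_formed s" shows "wkk s (length s) = []"
  using INV_D(2)[OF assms order_refl] tpu_len[of s "length s"] tpo_len[of s "length s"] wf_total[OF assms] by simp

lemma produced_eq: "produced s = outk s (length s)" by (simp add: produced_def outk_def)

lemma produced_len: assumes "well_formed s" shows "length (produced s) = seq_size s"
  using INV_D(3)[OF assms order_refl] tpo_len[of s "length s"] wf_total[OF assms] produced_eq by simp

lemma produced_distinct: assumes "well_formed s" shows "distinct (produced s)"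
  using INV_D(6)[OF assms order_refl] final_wk[OF assms] produced_eq by simp

lemma produced_set: assumes "well_formed s" shows "set (produced s) = {1..seq_size s}"
  using INV_D(7)[OF assms order_refl] final_wk[OF assms] produced_eq tpu_len[of s "length s"] by simp

lemma exec_out: "\<exists>pre. snd (snd (exec_op x st)) = pre @ snd (snd st)"
  by (cases x; cases st) auto

lemma fold_out: "\<exists>pre. snd (snd (fold exec_op ops st)) = pre @ snd (snd st)"
proof (induction ops arbitrary: st)
  case Nil then show ?case by simp
next
  case (Cons x ops)
  obtain p1 where "snd (snd (exec_op x st)) = p1 @ snd (snd st)" using exec_out by blast
  moreover obtain p2 where "snd (snd (fold exec_op ops (exec_op x st))) = p2 @ snd (snd (exec_op x st))"
    using Cons by blast
  ultimately show ?case by auto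
qed

lemma out_suffix: assumes wf: "well_formed s" and k: "k \<le> length s"
  shows "outk s k = drop (seq_size s - tpo s k) (produced s)"
proof -
  obtain pre where p: "produced s = pre @ outk s k"
    using fold_out[of "drop k s" "state_after s k"] state_after_rest[OF k]
    by (auto simp: produced_def outk_def)
  have "length pre = seq_size s - tpo s k" using p produced_len[OF wf] INV_D(3)[OF wf k] by simp
  then show ?thesis using p by simp
qed




definition LP :: "nat \<Rightarrow> nat \<Rightarrow> state \<Rightarrow> bool" where
 "LP e f st \<longleftrightarrow> (\<exists>j j'. j < j' \<and> j' < length (fst (snd st)) \<and> fst (snd st) ! j = e \<and> fst (snd st) ! j' = f)
     \<or> e \<in> set (snd (snd st))"

lemma LP_exec: "LP e f st \<Longrightarrow> LP e f (exec_op x st)"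
proof -
  assume H: "LP e f st"
  obtain inp w ou where st: "st = (inp, w, ou)" by (cases st) auto
  show ?thesis
  proof (cases x)
    case (Push a)
    show ?thesis
    proof (cases "e \<in> set ou")
      case True then show ?thesis using st Push by (simp add: LP_def)
    next
      case False
      then obtain j j' where jj: "j < j'" "j' < length w" "w!j = e" "w!j' = f" using H st by (auto simp: LP_def)
      define A where "A = take a inp"
      have "(A @ w) ! (length A + j) = e" "(A @ w) ! (length A + j') = f"
        using jj by simp_all
      moreover have "exec_op x st = (drop a inp, A @ w, ou)" using st Push A_def by simp
      ultimately show ?thesis using jj unfolding LP_def
        by (intro disjI1 exI[of _ "length A + j"] exI[of _ "length A + j'"]) simp
    qed
  next
    case (Pop b)
    show ?thesis
    proof (cases "e \<in> set ou")
      case True then show ?thesis using st Pop by (simp add: LP_def)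
    next
      case False
      then obtain j j' where jj: "j < j'" "j' < length w" "w!j = e" "w!j' = f" using H st by (auto simp: LP_def)
      show ?thesis
      proof (cases "j < b")
        case True
        then have "e \<in> set (take b w)" using jj by (metis in_set_conv_nth length_take min_less_iff_conj nth_take order.strict_trans)
        then show ?thesis using st Pop by (simp add: LP_def)
      next
        case False
        then have "(drop b w) ! (j - b) = e" "(drop b w) ! (j' - b) = f" using jj by simp_all
        moreover have "j - b < j' - b" "j' - b < length (drop b w)" using jj False by auto
        ultimately show ?thesis using st Pop unfolding LP_def by fastforce
      qed
    qed
  qed
qed

lemma LP_fold: "LP e f st \<Longrightarrow> LP e f (fold exec_op ops st)"
  by (induction ops arbitrary: st) (simp_all add: LP_exec)

lemma LIFO:
  assumes wf: "well_formed s" and kk: "k \<le> k'" "k' \<le> length s"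
    and jj: "j < j'" "j' < length (wkk s k)"
    and fo: "wkk s k ! j' \<in> set (outk s k')"
  shows "wkk s k ! j \<in> set (outk s k')"
proof -
  have "LP (wkk s k ! j) (wkk s k ! j') (state_after s k)"
    using jj by (auto simp: LP_def wkk_def)
  moreover have "state_after s k' = fold exec_op (take (k' - k) (drop k s)) (state_after s k)"
  proof -
    have "take k' s = take k s @ take (k' - k) (drop k s)" using kk
      by (metis le_add_diff_inverse take_add)
    then show ?thesis by (simp add: state_after_def)
  qed
  ultimately have L: "LP (wkk s k ! j) (wkk s k ! j') (state_after s k')" using LP_fold by metis
  have d: "distinct (wkk s k' @ outk s k')" using INV_D(6)[OF wf kk(2)] .
  show ?thesis
  proof (rule ccontr)
    assume "wkk s k ! j \<notin> set (outk s k')"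
    then obtain i1 i2 where "i2 < length (wkk s k')" "wkk s k' ! i2 = wkk s k ! j'"
      using L by (auto simp: LP_def wkk_def outk_def)
    then have "wkk s k ! j' \<in> set (wkk s k')" by (metis nth_mem)
    then show False using d fo by auto
  qed
qed

definition seg :: "nat list \<Rightarrow> nat \<Rightarrow> nat list \<Rightarrow> bool" where
  "seg w t S \<longleftrightarrow> t + length S \<le> length w \<and> (\<forall>m < length S. w ! (t + m) = S ! m)"

definition CP :: "nat list \<Rightarrow> state \<Rightarrow> bool" where
 "CP S st \<longleftrightarrow> (\<exists>t. seg (fst (snd st)) t S) \<or> (\<exists>t. seg (snd (snd st)) t S)
    \<or> (S!0 \<in> set (snd (snd st)) \<and> last S \<in> set (fst (snd st)))
    \<or> (\<exists>p p'. p' < p \<and> p < length (snd (snd st)) \<and> snd (snd st) ! p = S!0 \<and> snd (snd st) ! p' = last S)"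

lemma seg_prepend: "seg w t S \<Longrightarrow> seg (A @ w) (length A + t) S"
  by (simp add: seg_def nth_append)

lemma CP_exec: assumes ne: "S \<noteq> []" and H: "CP S st" shows "CP S (exec_op x st)"
proof -
  obtain inp w ou where st: "st = (inp, w, ou)" by (cases st) auto
  have lastS: "last S = S ! (length S - 1)" using ne by (simp add: last_conv_nth)
  show ?thesis
  proof (cases x)
    case (Push a)
    define A where "A = take a inp"
    have ex: "exec_op x st = (drop a inp, A @ w, ou)" using st Push A_def by simp
    have H': "(\<exists>t. seg w t S) \<or> (\<exists>t. seg ou t S) \<or> (S!0 \<in> set ou \<and> last S \<in> set w)
      \<or> (\<exists>p p'. p' < p \<and> p < length ou \<and> ou ! p = S!0 \<and> ou ! p' = last S)"
      using H unfolding st CP_def by simp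
    have G: "(\<exists>t. seg (A @ w) t S) \<or> (\<exists>t. seg ou t S) \<or> (S!0 \<in> set ou \<and> last S \<in> set (A @ w))
      \<or> (\<exists>p p'. p' < p \<and> p < length ou \<and> ou ! p = S!0 \<and> ou ! p' = last S)"
      using H' seg_prepend[of w _ S A] set_append[of A w] by blast
    show ?thesis unfolding CP_def ex using G by (simp only: fst_conv snd_conv)
  next
    case (Pop b)
    have ex: "exec_op x st = (inp, drop b w, take b w @ ou)" using st Pop by simp
    consider (c1) t where "seg w t S" | (c2) t where "seg ou t S"
      | (c3) "S!0 \<in> set ou" "last S \<in> set w"
      | (c4) p p' where "p' < p" "p < length ou" "ou ! p = S!0" "ou ! p' = last S"
      using H unfolding st CP_def by (simp only: fst_conv snd_conv) blast
    then show ?thesis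
    proof cases
      case c1
      then have sg: "t + length S \<le> length w" "\<And>m. m < length S \<Longrightarrow> w ! (t + m) = S ! m"
        by (auto simp: seg_def)
      consider (a) "b \<le> t" | (b) "t + length S \<le> b" | (c) "t < b" "b < t + length S" by linarith
      then show ?thesis
      proof cases
        case a
        have "seg (drop b w) (t - b) S" using sg a by (auto simp: seg_def)
        then show ?thesis unfolding CP_def ex by auto
      next
        case b
        have "seg (take b w @ ou) t S" using sg b by (auto simp: seg_def nth_append)
        then show ?thesis unfolding CP_def ex by auto
      next
        case c
        have "S ! 0 = w ! t" using sg(2)[of 0] ne by simp
        moreover have "take b w ! t = w ! t" "t < length (take b w)" using c sg(1) ne by auto
        ultimately have i1: "S ! 0 \<in> set (take b w)" by (metis nth_mem)
        have "last S = w ! (t + (length S - 1))" using sg(2)[of "length S - 1"] ne lastS by simp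
        moreover have "drop b w ! (t + (length S - 1) - b) = w ! (t + (length S - 1))"
           "t + (length S - 1) - b < length (drop b w)" using c sg(1) ne by auto
        ultimately have "last S \<in> set (drop b w)" by (metis nth_mem)
        then show ?thesis unfolding CP_def ex using i1 by auto
      qed
    next
      case c2
      then have "seg (take b w @ ou) (length (take b w) + t) S" by (rule seg_prepend)
      then show ?thesis unfolding CP_def ex fst_conv snd_conv by blast
    next
      case c3
      show ?thesis
      proof (cases "last S \<in> set (take b w)")
        case True
        then obtain p' where p': "p' < length (take b w)" "take b w ! p' = last S" by (metis in_set_conv_nth)
        obtain p where p: "p < length ou" "ou ! p = S ! 0" using c3 by (metis in_set_conv_nth)
        have q: "(take b w @ ou) ! (length (take b w) + p) = S!0" using p(2) by (simp only: nth_append_length_plus)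
        have q2: "(take b w @ ou) ! p' = last S" using p'  by (simp add: nth_append)
        have r: "p' < length (take b w) + p" "length (take b w) + p < length (take b w @ ou)"
          using p p' by (auto simp: min_def)
        have "\<exists>p p'. p' < p \<and> p < length (take b w @ ou) \<and> (take b w @ ou) ! p = S!0 \<and> (take b w @ ou) ! p' = last S"
          using q q2 r by blast
        then show ?thesis unfolding CP_def ex fst_conv snd_conv by blast
      next
        case False
        then have "last S \<in> set (drop b w)" using c3
          by (metis Un_iff append_take_drop_id set_append)
        then show ?thesis unfolding CP_def ex using c3 by auto
      qed
    next
      case c4
      have q: "(take b w @ ou) ! (length (take b w) + p) = S!0" "(take b w @ ou) ! (length (take b w) + p') = last S"
        using c4(3,4) by (simp_all only: nth_append_length_plus)
      have r: "length (take b w) + p' < length (take b w) + p" "length (take b w) + p < length (take b w @ ou)"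
        using c4(1,2) by simp_all
      have "\<exists>p p'. p' < p \<and> p < length (take b w @ ou) \<and> (take b w @ ou) ! p = S!0 \<and> (take b w @ ou) ! p' = last S"
        using q r by blast
      then show ?thesis unfolding CP_def ex fst_conv snd_conv by blast
    qed
  qed
qed

lemma CP_fold: "S \<noteq> [] \<Longrightarrow> CP S st \<Longrightarrow> CP S (fold exec_op ops st)"
  by (induction ops arbitrary: st) (simp_all add: CP_exec)

lemma toolC:
  assumes wf: "well_formed s" and k: "k \<le> length s"
    and jj: "j < j'" "j' < length (wkk s k)"
  shows "(\<exists>p p'. p' < p \<and> p < length (produced s) \<and> produced s ! p = wkk s k ! j \<and> produced s ! p' = wkk s k ! j')
     \<or> (\<exists>t. t + (j' - j) < length (produced s) \<and> (\<forall>m \<le> j' - j. produced s ! (t + m) = wkk s k ! (j + m)))"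
proof -
  define S where "S = take (Suc (j' - j)) (drop j (wkk s k))"
  have lS: "length S = Suc (j' - j)" using jj by (simp add: S_def)
  have Sm: "\<And>m. m \<le> j' - j \<Longrightarrow> S ! m = wkk s k ! (j + m)" using jj by (simp add: S_def)
  have ne: "S \<noteq> []" using lS by auto
  have "j + length S \<le> length (wkk s k)" using lS jj by simp
  moreover have "\<forall>m<length S. wkk s k ! (j+m) = S ! m" using lS Sm by (metis less_Suc_eq_le)
  ultimately have "seg (wkk s k) j S" by (simp add: seg_def)
  then have "CP S (state_after s k)" by (auto simp: CP_def wkk_def)
  then have "CP S (fold exec_op (drop k s) (state_after s k))" using CP_fold[OF ne] by blast
  then have "CP S (state_after s (length s))" unfolding state_after_rest[OF k, symmetric] .
  moreover have "state_after s (length s) = (inpk s (length s), [], produced s)"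
    using final_wk[OF wf] state_after_split[of s "length s"] produced_eq[of s] by simp
  ultimately have C: "CP S (inpk s (length s), [], produced s)" by simp
  have S0: "S ! 0 = wkk s k ! j" using Sm[of 0] by simp
  have Sl: "last S = wkk s k ! j'" using Sm[of "j' - j"] lS jj ne by (simp add: last_conv_nth)
  have C2: "(\<exists>t. seg [] t S) \<or> (\<exists>t. seg (produced s) t S) \<or> (S!0 \<in> set (produced s) \<and> last S \<in> set [])
     \<or> (\<exists>p p'. p' < p \<and> p < length (produced s) \<and> produced s ! p = S!0 \<and> produced s ! p' = last S)"
    using C unfolding CP_def fst_conv snd_conv .
  have "\<not> (\<exists>t. seg [] t S)" using ne by (simp add: seg_def)
  then have C': "(\<exists>t. seg (produced s) t S) \<or> (\<exists>p p'. p' < p \<and> p < length (produced s) \<and> produced s ! p = S!0 \<and> produced s ! p' = last S)"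
    using C2 by simp
  from C' consider (a) t where "seg (produced s) t S" | (b) p p' where "p' < p" "p < length (produced s)"
      "produced s ! p = S!0" "produced s ! p' = last S"
    by blast
  then show ?thesis
  proof cases
    case a
    then have "t + (j' - j) < length (produced s)" "\<forall>m \<le> j' - j. produced s ! (t + m) = wkk s k ! (j + m)"
      using lS Sm by (auto simp: seg_def)
    then show ?thesis by blast
  next
    case b
    have "produced s ! p = wkk s k ! j" "produced s ! p' = wkk s k ! j'" using b S0 Sl by simp_all
    then show ?thesis using b(1,2) by blast
  qed
qed




definition pos :: "nat list \<Rightarrow> nat \<Rightarrow> nat" where
  "pos l a = (THE p. p < length l \<and> l ! p = a)"

lemma pos_nth: "distinct l \<Longrightarrow> p < length l \<Longrightarrow> pos l (l ! p) = p"
  unfolding pos_def by (rule the_equality) (auto simp: nth_eq_iff_index_eq)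

lemma pos_in: assumes "distinct l" "a \<in> set l" shows "pos l a < length l" "l ! pos l a = a"
proof -
  obtain p where "p < length l" "l ! p = a" using assms(2) by (metis in_set_conv_nth)
  then show "pos l a < length l" "l ! pos l a = a" using pos_nth[OF assms(1)] by auto
qed

lemma pos_eqI: "distinct l \<Longrightarrow> p < length l \<Longrightarrow> l ! p = a \<Longrightarrow> pos l a = p"
  using pos_nth by blast

lemma wkk_push: assumes wf: "well_formed s" and k: "k < length s" and sk: "s!k = Push a"
  shows "wkk s (Suc k) = [tpu s k + 1..<tpu s k + a + 1] @ wkk s k"
    "outk s (Suc k) = outk s k" "tpu s (Suc k) = tpu s k + a" "tpo s (Suc k) = tpo s k"
proof -
  have st: "state_after s (Suc k) = exec_op (s!k) (inpk s k, wkk s k, outk s k)"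
    using state_after_Suc[OF k] state_after_split by metis
  have tu: "tpu s (Suc k) = tpu s k + a" using tpu_Suc[OF k] sk by simp
  have tpn: "tpu s (Suc k) \<le> seq_size s" using INV_D(5)[OF wf] k by simp
  have "drop (tpu s k) [1..<seq_size s + 1] = [tpu s k + 1..<seq_size s + 1]" by (simp add: add.commute)
  moreover have "take a [tpu s k + 1..<seq_size s + 1] = [tpu s k + 1..<tpu s k + 1 + a]"
    by (rule take_upt) (use tpn tu in simp)
  ultimately have blk: "take a (inpk s k) = [tpu s k + 1..<tpu s k + a + 1]"
    using INV_D(1)[OF wf] k by simp
  show "wkk s (Suc k) = [tpu s k + 1..<tpu s k + a + 1] @ wkk s k"
    using st sk blk by (simp add: wkk_def)
  show "outk s (Suc k) = outk s k" using st sk by (simp add: outk_def)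
  show "tpu s (Suc k) = tpu s k + a" by (rule tu)
  show "tpo s (Suc k) = tpo s k" using tpo_Suc[OF k] sk by simp
qed

lemma wkk_pop: assumes k: "k < length s" and sk: "s!k = Pop b"
  shows "wkk s (Suc k) = drop b (wkk s k)" "outk s (Suc k) = take b (wkk s k) @ outk s k"
    "tpu s (Suc k) = tpu s k" "tpo s (Suc k) = tpo s k + b"
proof -
  have st: "state_after s (Suc k) = exec_op (s!k) (inpk s k, wkk s k, outk s k)"
    using state_after_Suc[OF k] state_after_split by metis
  show "wkk s (Suc k) = drop b (wkk s k)" using st sk by (simp add: wkk_def)
  show "outk s (Suc k) = take b (wkk s k) @ outk s k" using st sk by (simp add: outk_def)
  show "tpu s (Suc k) = tpu s k" using tpu_Suc[OF k] sk by simp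
  show "tpo s (Suc k) = tpo s k + b" using tpo_Suc[OF k] sk by simp
qed

lemma support_push: assumes wf: "well_formed s" and k: "k < length s" and sk: "s!k = Push a"
  shows "support s k = {tpu s k + 1..tpu s k + a}"
proof -
  have tu: "tpu s (Suc k) = tpu s k + a" using tpu_Suc[OF k] sk by simp
  have tpn: "tpu s (Suc k) \<le> seq_size s" using INV_D(5)[OF wf] k by simp
  have "drop (tpu s k) [1..<seq_size s + 1] = [tpu s k + 1..<seq_size s + 1]" by (simp add: add.commute)
  moreover have "take a [tpu s k + 1..<seq_size s + 1] = [tpu s k + 1..<tpu s k + 1 + a]"
    by (rule take_upt) (use tpn tu in simp)
  ultimately have blk: "take a (inpk s k) = [tpu s k + 1..<tpu s k + a + 1]"
    using INV_D(1)[OF wf] k by simp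
  have "support s k = set (take a (inpk s k))"
    unfolding support_def using sk state_after_split[of s k] by simp
  then show ?thesis using blk by auto
qed

lemma support_pop: assumes sk: "s!k = Pop b"
  shows "support s k = set (take b (wkk s k))"
  unfolding support_def using sk state_after_split[of s k] by simp

lemma outk_drop: "well_formed s \<Longrightarrow> k \<le> length s \<Longrightarrow> outk s k = drop (seq_size s - tpo s k) (produced s)"
  by (rule out_suffix)

lemma out_mono: assumes wf: "well_formed s" and kk: "k \<le> k'" "k' \<le> length s"
  shows "set (outk s k) \<subseteq> set (outk s k')"
proof -
  have "tpo s k \<le> tpo s k'" using tpo_mono kk by blast
  then have "seq_size s - tpo s k' \<le> seq_size s - tpo s k" by simp
  then show ?thesis using outk_drop[OF wf] kk
    by (metis order.trans set_drop_subset_set_drop)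
qed

lemma wk_out_disj: "well_formed s \<Longrightarrow> k \<le> length s \<Longrightarrow> e \<in> set (wkk s k) \<Longrightarrow> e \<notin> set (outk s k)"
  using INV_D(6) by fastforce

lemma support_pop_out: assumes wf: "well_formed s" and k: "k < length s" and sk: "s!k = Pop b"
  and e: "e \<in> support s k"
  shows "e \<in> set (outk s (Suc k))" "e \<in> set (wkk s k)" "e \<notin> set (outk s k)"
proof -
  have "e \<in> set (take b (wkk s k))" using e support_pop[OF sk] by simp
  then show "e \<in> set (outk s (Suc k))" "e \<in> set (wkk s k)"
    using wkk_pop[OF k sk] in_set_takeD by auto
  then show "e \<notin> set (outk s k)" using wk_out_disj[OF wf, of k e] k by simp
qed

lemma out_bound: "well_formed s \<Longrightarrow> k \<le> length s \<Longrightarrow> e \<in> set (outk s k) \<Longrightarrow> 1 \<le> e \<and> e \<le> tpu s k"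
  using INV_D(7) by fastforce
lemma wk_bound: "well_formed s \<Longrightarrow> k \<le> length s \<Longrightarrow> e \<in> set (wkk s k) \<Longrightarrow> 1 \<le> e \<and> e \<le> tpu s k"
  using INV_D(7) by fastforce

lemma pop_order: assumes wf: "well_formed s" and k: "k \<le> length s"
  and e: "e \<in> set (outk s k)" and f: "f \<in> set (produced s)" "f \<notin> set (outk s k)"
  shows "pos (produced s) f < pos (produced s) e"
proof -
  let ?P = "produced s" and ?d = "seq_size s - tpo s k"
  have d: "distinct ?P" using produced_distinct[OF wf] .
  have o: "outk s k = drop ?d ?P" using outk_drop[OF wf k] .
  have "pos ?P e \<ge> ?d"
  proof -
    obtain q where q: "q < length (drop ?d ?P)" "drop ?d ?P ! q = e" using e o by (metis in_set_conv_nth)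
    then have "pos ?P e = ?d + q" using d by (intro pos_eqI) auto
    then show ?thesis by simp
  qed
  moreover have "pos ?P f < ?d"
  proof (rule ccontr)
    assume "\<not> pos ?P f < ?d"
    then have i: "?d \<le> pos ?P f" by simp
    have "drop ?d ?P ! (pos ?P f - ?d) = ?P ! pos ?P f" using i pos_in[OF d f(1)] by simp
    moreover have "pos ?P f - ?d < length (drop ?d ?P)" using i pos_in[OF d f(1)] by simp
    ultimately have "?P ! pos ?P f \<in> set (drop ?d ?P)" by (metis nth_mem)
    then show False using f pos_in[OF d f(1)] o by simp
  qed
  ultimately show ?thesis by simp
qed

lemma popped_once: assumes wf: "well_formed s" and j: "j1 < j2" "j2 < length s"
  and p1: "s!j1 = Pop b1" and p2: "s!j2 = Pop b2" and e: "e \<in> support s j1" "e \<in> support s j2"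
  shows False
proof -
  have "e \<in> set (outk s (Suc j1))" using support_pop_out[OF wf _ p1 e(1)] j by simp
  then have "e \<in> set (outk s j2)" using out_mono[OF wf, of "Suc j1" j2] j by auto
  moreover have "e \<notin> set (outk s j2)" using support_pop_out[OF wf j(2) p2 e(2)] by simp
  ultimately show False by simp
qed

lemma vertex_sum: "(sum_list (map (fst \<circ> dvec) l), sum_list (map (snd \<circ> dvec) l))
   = (int (total_push l) + int (total_pop l), int (total_push l) - int (total_pop l))"
proof (induction l)
  case Nil then show ?case by (simp add: total_push_def total_pop_def)
next
  case (Cons x l)
  have "total_push (x # l) = push_amt x + total_push l" "total_pop (x # l) = pop_amt x + total_pop l"
    using total_push_append[of "[x]" l] total_pop_append[of "[x]" l] by simp_all
  then show ?case using Cons by (cases x) auto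
qed

lemma vertex_eq: "vertex s k = (int (tpu s k) + int (tpo s k), int (tpu s k) - int (tpo s k))"
  unfolding vertex_def tpu_def tpo_def using vertex_sum by simp

lemma tpo_const: assumes "\<forall>q. a \<le> q \<and> q < b \<longrightarrow> is_push (s!q)" "b \<le> length s" "a \<le> b"
  shows "tpo s b = tpo s a"
  using assms
proof (induction b)
  case 0 then show ?case by simp
next
  case (Suc b)
  show ?case
  proof (cases "a = Suc b")
    case True then show ?thesis by simp
  next
    case False
    then have ab: "a \<le> b" using Suc by simp
    have "is_push (s!b)" using Suc ab by simp
    then have "pop_amt (s!b) = 0" by (cases "s!b") auto
    then show ?thesis using tpo_Suc[of b s] Suc ab by simp
  qed
qed

lemma wk_const: assumes "\<forall>q. a \<le> q \<and> q < b \<longrightarrow> is_push (s!q)" "b \<le> length s" "a \<le> b" "well_formed s"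
  shows "\<exists>pre. wkk s b = pre @ wkk s a"
  using assms
proof (induction b)
  case 0 then show ?case by simp
next
  case (Suc b)
  show ?case
  proof (cases "a = Suc b")
    case True then show ?thesis by simp
  next
    case False
    then have ab: "a \<le> b" using Suc by simp
    have "is_push (s!b)" using Suc ab by simp
    then obtain c where c: "s!b = Push c" by (cases "s!b") auto
    obtain pre where "wkk s b = pre @ wkk s a" using Suc ab by auto
    then show ?thesis using wkk_push(1)[OF Suc(5) _ c] Suc by auto
  qed
qed




lemma push_size_pos: "well_formed s \<Longrightarrow> k < length s \<Longrightarrow> s!k = Push a \<Longrightarrow> a \<ge> 1"
  using wf_opsize by fastforce
lemma pop_size_pos: "well_formed s \<Longrightarrow> k < length s \<Longrightarrow> s!k = Pop b \<Longrightarrow> b \<ge> 1"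
  using wf_opsize by fastforce

lemma first_pop:
  assumes wf: "well_formed s" and red: "reduced s" and k: "k < length s" and sk: "s!k = Push a"
  shows "\<exists>p. k < p \<and> p < length s \<and> s!p = Pop 1 \<and> s!(p - 1) = Push 1
          \<and> (\<forall>q. k \<le> q \<and> q < p \<longrightarrow> is_push (s!q))
          \<and> outk s (Suc p) = tpu s p # outk s k \<and> tpu s (Suc k) \<le> tpu s p"
proof -
  define P where "P = {q. k < q \<and> q < length s \<and> \<not> is_push (s!q)}"
  have "P \<noteq> {}"
  proof
    assume e: "P = {}"
    have allp: "\<forall>q. Suc k \<le> q \<and> q < length s \<longrightarrow> is_push (s!q)" using e unfolding P_def by auto
    have "tpo s (length s) = tpo s (Suc k)" using tpo_const[OF allp] k by simp
    also have "\<dots> = tpo s k" using tpo_Suc[OF k] sk by simp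
    finally have A: "tpo s (length s) = tpo s k" .
    have "tpo s (length s) = seq_size s" using tpo_len[of s "length s"] wf_total[OF wf] by simp
    moreover have "tpo s k \<le> tpu s k" using INV_D(4)[OF wf] k by simp
    moreover have "tpu s (Suc k) = tpu s k + a" using tpu_Suc[OF k] sk by simp
    moreover have "a \<ge> 1" using push_size_pos[OF wf k sk] .
    moreover have "tpu s (Suc k) \<le> seq_size s" using INV_D(5)[OF wf] k by simp
    ultimately show False using A by simp
  qed
  define p where "p = Least (\<lambda>q. q \<in> P)"
  have pP: "p \<in> P" using \<open>P \<noteq> {}\<close> unfolding p_def by (metis LeastI equals0I)
  have pmin: "\<And>q. q \<in> P \<Longrightarrow> p \<le> q" unfolding p_def by (simp add: Least_le)
  have kp: "k < p" "p < length s" "\<not> is_push (s!p)" using pP unfolding P_def by auto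
  have allp: "\<forall>q. k \<le> q \<and> q < p \<longrightarrow> is_push (s!q)"
  proof (intro allI impI)
    fix q assume q: "k \<le> q \<and> q < p"
    show "is_push (s!q)"
    proof (cases "q = k")
      case True then show ?thesis using sk by simp
    next
      case False
      then have "q \<notin> P" using pmin q by (meson leD)
      then show ?thesis using q False kp unfolding P_def by auto
    qed
  qed
  have pm1: "Suc (p - 1) = p" using kp by simp
  have "is_push (s!(p-1))" using allp kp by simp
  then have rr: "s!(p-1) = Push 1 \<and> s!p = Pop 1"
    using red kp pm1 unfolding reduced_def by (metis diff_less less_nat_zero_code not_gr_zero zero_less_one)
  have p1l: "p - 1 < length s" using kp by simp
  have w: "wkk s p = [tpu s (p-1) + 1..<tpu s (p-1) + 1 + 1] @ wkk s (p-1)"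
    using wkk_push(1)[OF wf p1l] rr pm1 by simp
  have tu: "tpu s p = tpu s (p-1) + 1" using wkk_push(3)[OF wf p1l] rr pm1 by simp
  have o1: "outk s (Suc p) = take 1 (wkk s p) @ outk s p" using wkk_pop(2)[OF kp(2)] rr by simp
  have "take 1 (wkk s p) = [tpu s p]" using w tu by simp
  moreover have "outk s p = outk s k"
  proof -
    have "tpo s p = tpo s k" using tpo_const[OF allp] kp by simp
    then show ?thesis using outk_drop[OF wf] kp by simp
  qed
  ultimately have "outk s (Suc p) = tpu s p # outk s k" using o1 by simp
  moreover have "tpu s (Suc k) \<le> tpu s p" using tpu_mono kp by simp
  ultimately show ?thesis using kp rr allp by blast
qed

lemma nonint:
  fixes S :: "nat set"
  assumes fin: "finite S" and ni: "\<not> (\<exists>s t. S = {s..<t})"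
  shows "\<exists>j1 m j2. j1 \<in> S \<and> j2 \<in> S \<and> j1 < m \<and> m < j2 \<and> m \<notin> S"
proof (rule ccontr)
  assume H: "\<not> ?thesis"
  show False
  proof (cases "S = {}")
    case True then show False using ni by (metis atLeastLessThan_empty order_refl)
  next
    case False
    have "S = {Min S..<Suc (Max S)}"
    proof
      show "S \<subseteq> {Min S..<Suc (Max S)}" using fin by (auto simp: less_Suc_eq_le)
      show "{Min S..<Suc (Max S)} \<subseteq> S"
      proof
        fix v assume v: "v \<in> {Min S..<Suc (Max S)}"
        show "v \<in> S"
        proof (cases "v = Min S \<or> v = Max S")
          case True then show ?thesis using fin False Min_in Max_in by blast
        next
          case F: False
          then have "Min S < v" "v < Max S" using v by auto
          moreover have "Min S \<in> S" "Max S \<in> S" using fin False by simp_all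
          ultimately show ?thesis using H by blast
        qed
      qed
    qed
    then show False using ni by blast
  qed
qed




lemma in_out_idx: assumes wf: "well_formed s" and k: "k \<le> length s"
  and p: "seq_size s - tpo s k \<le> p" "p < seq_size s"
  shows "produced s ! p \<in> set (outk s k)"
proof -
  let ?d = "seq_size s - tpo s k"
  have "drop ?d (produced s) ! (p - ?d) = produced s ! p" using p produced_len[OF wf] by simp
  moreover have "p - ?d < length (drop ?d (produced s))" using p produced_len[OF wf] by simp
  ultimately show ?thesis using outk_drop[OF wf k] by (metis nth_mem)
qed

lemma out_idx: assumes wf: "well_formed s" and k: "k \<le> length s"
  and p: "p < seq_size s" and e: "produced s ! p \<in> set (outk s k)"
  shows "seq_size s - tpo s k \<le> p"
proof (rule ccontr)
  assume "\<not> ?thesis"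
  then have "pos (produced s) (produced s ! p) < seq_size s - tpo s k"
    using pos_nth[OF produced_distinct[OF wf]] p produced_len[OF wf] by simp
  moreover have "pos (produced s) (produced s ! p) \<ge> seq_size s - tpo s k"
  proof -
    let ?d = "seq_size s - tpo s k"
    obtain q where q: "q < length (drop ?d (produced s))" "drop ?d (produced s) ! q = produced s ! p"
      using e outk_drop[OF wf k] by (metis in_set_conv_nth)
    then have "pos (produced s) (produced s ! p) = ?d + q"
      using produced_distinct[OF wf] by (intro pos_eqI) auto
    then show ?thesis by simp
  qed
  ultimately show False by simp
qed

lemma toolC':
  assumes wf: "well_formed s" and k: "k \<le> length s"
    and jj: "j < j'" "j' < length (wkk s k)"
  shows "pos (produced s) (wkk s k ! j') < pos (produced s) (wkk s k ! j)
     \<or> (\<forall>m \<le> j' - j. pos (produced s) (wkk s k ! (j + m)) = pos (produced s) (wkk s k ! j) + m)"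
proof -
  have d: "distinct (produced s)" using produced_distinct[OF wf] .
  from toolC[OF wf k jj] show ?thesis
  proof
    assume "\<exists>p p'. p' < p \<and> p < length (produced s) \<and> produced s ! p = wkk s k ! j \<and> produced s ! p' = wkk s k ! j'"
    then obtain p p' where "p' < p" "p < length (produced s)" "produced s ! p = wkk s k ! j" "produced s ! p' = wkk s k ! j'"
      by blast
    then show ?thesis using pos_eqI[OF d] by (metis order.strict_trans disjI1)
  next
    assume "\<exists>t. t + (j' - j) < length (produced s) \<and> (\<forall>m \<le> j' - j. produced s ! (t + m) = wkk s k ! (j + m))"
    then obtain t where t: "t + (j' - j) < length (produced s)" "\<forall>m \<le> j' - j. produced s ! (t + m) = wkk s k ! (j + m)"
      by blast
    have "\<And>m. m \<le> j' - j \<Longrightarrow> pos (produced s) (wkk s k ! (j + m)) = t + m"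
      using t by (intro pos_eqI[OF d]) auto
    then have "pos (produced s) (wkk s k ! j) = t" by (metis add_0_right le0)
    then show ?thesis using \<open>\<And>m. m \<le> j' - j \<Longrightarrow> _\<close> by auto
  qed
qed

lemma block_of: assumes wf: "well_formed s" and v: "1 \<le> v" "v \<le> seq_size s"
  shows "\<exists>k < length s. tpu s k < v \<and> v \<le> tpu s (Suc k) \<and> (\<exists>a. s!k = Push a)"
proof -
  define K where "K = (LEAST k. v \<le> tpu s k)"
  have ex: "v \<le> tpu s (length s)" using tpu_len[of s "length s"] v by simp
  have K1: "v \<le> tpu s K" unfolding K_def using ex by (rule LeastI)
  have K0: "K \<noteq> 0"
  proof
    assume "K = 0" then show False using K1 v by simp
  qed
  define k where "k = K - 1"
  have kK: "Suc k = K" using K0 k_def by simp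
  have k1: "\<not> v \<le> tpu s k" unfolding k_def K_def using K0 K_def not_less_Least by (metis diff_less not_gr_zero zero_less_one)
  have kl: "k < length s"
  proof (rule ccontr)
    assume "\<not> k < length s"
    then have "tpu s k = seq_size s" using tpu_len by simp
    then show False using k1 v by simp
  qed
  have "\<exists>a. s!k = Push a"
  proof (cases "s!k")
    case (Pop b)
    then have "tpu s (Suc k) = tpu s k" using tpu_Suc[OF kl] by simp
    then show ?thesis using k1 K1 kK by simp
  qed simp
  then show ?thesis using kl k1 K1 kK by (metis not_le)
qed

lemma tpo_eq_push: assumes wf: "well_formed s" and ab: "a \<le> b" "b \<le> length s" and eq: "tpo s a = tpo s b"
  shows "\<forall>q. a \<le> q \<and> q < b \<longrightarrow> is_push (s!q)"
proof (intro allI impI)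
  fix q assume q: "a \<le> q \<and> q < b"
  show "is_push (s!q)"
  proof (cases "s!q")
    case (Pop c)
    have ql: "q < length s" using q ab by simp
    have "c \<ge> 1" using pop_size_pos[OF wf ql Pop] .
    then have "tpo s (Suc q) > tpo s q" using tpo_Suc[OF ql] Pop by simp
    moreover have "tpo s a \<le> tpo s q" "tpo s (Suc q) \<le> tpo s b" using tpo_mono q by auto
    ultimately show ?thesis using eq by simp
  qed simp
qed




declare upt_Suc[simp del]


lemma ys_part:
  assumes wf: "well_formed ys" and red: "reduced ys"
    and n: "seq_size ys = n" and P: "produced ys = P"
    and x1: "1 \<le> x" and xL: "x \<le> L" and Ln: "L < n"
    and Qn: "Q < n"
    and Dsmall: "\<forall>p. n - Q \<le> p \<and> p < n \<longrightarrow> P!p < x"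
    and g: "L < P ! (n - Q - 1)"
    and yL: "L < y" and yin: "y \<in> set P"
    and y1: "pos P L < pos P y" and y2: "pos P y < pos P x" and y3: "pos P y < pos P (Suc L)"
    and y4: "1 < x \<Longrightarrow> (\<forall>p. n - Q \<le> p \<and> p < n \<longrightarrow> P!p \<noteq> x - 1) \<Longrightarrow> pos P (x - 1) < pos P y"
  shows "\<exists>T < length ys. ys!T = Push (Suc L - x) \<and> tpu ys T = x - 1 \<and> tpo ys T = Q"
proof -
  have d: "distinct P" using produced_distinct[OF wf] P by simp
  have lenP: "length P = n" using produced_len[OF wf] P n by simp
  obtain T a' where T: "T < length ys" "tpu ys T < x" "x \<le> tpu ys (Suc T)" "ys!T = Push a'"
    using block_of[OF wf x1] xL Ln n by (metis le_less_trans less_imp_le_nat)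
  have wT: "wkk ys (Suc T) = [tpu ys T + 1..<tpu ys T + a' + 1] @ wkk ys T"
    and tuT: "tpu ys (Suc T) = tpu ys T + a'" and toT: "tpo ys (Suc T) = tpo ys T"
    using wkk_push[OF wf T(1) T(4)] by simp_all
  have q1: "tpo ys T \<le> Q"
  proof (rule ccontr)
    assume "\<not> ?thesis"
    then have "P ! (n - Q - 1) \<in> set (outk ys T)" using in_out_idx[OF wf, of T "n-Q-1"] T Qn n P by simp
    then have "P!(n-Q-1) \<le> tpu ys T" using out_bound[OF wf] T by auto
    then show False using g T xL by simp
  qed
  have q2: "Q \<le> tpo ys T"
  proof (rule ccontr)
    assume H: "\<not> ?thesis"
    obtain p where p: "T < p" "p < length ys" "ys!p = Pop 1" "outk ys (Suc p) = tpu ys p # outk ys T"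
       "tpu ys (Suc T) \<le> tpu ys p"
      using first_pop[OF wf red T(1) T(4)] by blast
    have l1: "length (outk ys (Suc p)) = Suc (tpo ys T)" using p(4) INV_D(3)[OF wf] T by simp
    have "tpo ys (Suc p) = Suc (tpo ys T)" using l1 INV_D(3)[OF wf, of "Suc p"] p by simp
    then have "outk ys (Suc p) = drop (n - Suc (tpo ys T)) P" using outk_drop[OF wf, of "Suc p"] p n P by simp
    moreover have "n - Suc (tpo ys T) < length P" using lenP Qn H by simp
    ultimately have "P ! (n - Suc (tpo ys T)) = tpu ys p" using p(4) by (metis hd_drop_conv_nth list.sel(1))
    moreover have "P ! (n - Suc (tpo ys T)) < x" using Dsmall H Qn by simp
    ultimately show False using p(5) T(3) by simp
  qed
  have qT: "tpo ys T = Q" using q1 q2 by simp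
  have inD: "\<And>p. n - Q \<le> p \<Longrightarrow> p < n \<Longrightarrow> P!p \<in> set (outk ys T)"
    using in_out_idx[OF wf] T qT n P by simp
  have b0: "tpu ys T = x - 1"
  proof (rule ccontr)
    assume H: "tpu ys T \<noteq> x - 1"
    then have lt: "tpu ys T < x - 1" using T by simp
    then have x1': "1 < x" by simp
    have nd: "\<forall>p. n-Q \<le> p \<and> p < n \<longrightarrow> P!p \<noteq> x - 1"
    proof (intro allI impI)
      fix p assume "n-Q \<le> p \<and> p < n"
      then have "P!p \<in> set (outk ys T)" using inD by simp
      then have "P!p \<le> tpu ys T" using out_bound[OF wf] T by auto
      then show "P!p \<noteq> x-1" using lt by simp
    qed
    have py: "pos P (x-1) < pos P y" using y4[OF x1' nd] .
    define j where "j = x - 1 - (tpu ys T + 1)"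
    have wj: "wkk ys (Suc T) ! j = x - 1" "wkk ys (Suc T) ! (j+1) = x" "j + 1 < length (wkk ys (Suc T))"
      using wT lt T(3) tuT by (auto simp: j_def nth_append)
    have "pos P x < pos P (x - 1) \<or> (\<forall>m \<le> 1. pos P (wkk ys (Suc T) ! (j + m)) = pos P (x - 1) + m)"
      using toolC'[OF wf _ _ wj(3), of j] T P wj by simp
    then show False
    proof
      assume "pos P x < pos P (x - 1)" then show False using py y2 by simp
    next
      assume "\<forall>m \<le> 1. pos P (wkk ys (Suc T) ! (j + m)) = pos P (x - 1) + m"
      then have "pos P x = pos P (x - 1) + 1" using wj by (metis le_refl)
      then show False using py y2 by simp
    qed
  qed
  have M1: "tpu ys (Suc T) \<le> L"
  proof (rule ccontr)
    assume H: "\<not> ?thesis"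
    define j where "j = L - x"
    have wj: "wkk ys (Suc T) ! j = L" "wkk ys (Suc T) ! (j+1) = Suc L" "j + 1 < length (wkk ys (Suc T))"
      using wT b0 H tuT xL x1 by (auto simp: j_def nth_append)
    have "pos P (Suc L) < pos P L \<or> (\<forall>m \<le> 1. pos P (wkk ys (Suc T) ! (j + m)) = pos P L + m)"
      using toolC'[OF wf _ _ wj(3), of j] T P wj by simp
    then show False
    proof
      assume "pos P (Suc L) < pos P L" then show False using y1 y3 by simp
    next
      assume "\<forall>m \<le> 1. pos P (wkk ys (Suc T) ! (j + m)) = pos P L + m"
      then have "pos P (Suc L) = pos P L + 1" using wj by (metis le_refl)
      then show False using y1 y3 by simp
    qed
  qed
  have M2: "L \<le> tpu ys (Suc T)"
  proof (rule ccontr)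
    assume H: "\<not> ?thesis"
    obtain TL aL where TL: "TL < length ys" "tpu ys TL < L" "L \<le> tpu ys (Suc TL)" "ys!TL = Push aL"
      using block_of[OF wf, of L] xL x1 Ln n by (metis le_trans less_imp_le_nat)
    have wTL: "wkk ys (Suc TL) = [tpu ys TL + 1..<tpu ys TL + aL + 1] @ wkk ys TL"
      and tuTL: "tpu ys (Suc TL) = tpu ys TL + aL"
      using wkk_push[OF wf TL(1) TL(4)] by simp_all
    have TT: "Suc T \<le> TL"
    proof (rule ccontr)
      assume "\<not> ?thesis"
      then have "Suc TL \<le> Suc T" by simp
      then have "tpu ys (Suc TL) \<le> tpu ys (Suc T)" by (rule tpu_mono)
      then show False using H TL by simp
    qed
    have o1: "tpo ys TL \<le> Q"
    proof (rule ccontr)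
      assume "\<not> ?thesis"
      then have "P ! (n - Q - 1) \<in> set (outk ys TL)" using in_out_idx[OF wf, of TL "n-Q-1"] TL Qn n P by simp
      then have "P!(n-Q-1) \<le> tpu ys TL" using out_bound[OF wf] TL by auto
      then show False using g TL by simp
    qed
    have o2: "tpo ys (Suc T) \<le> tpo ys TL" using tpo_mono[OF TT] .
    have allp: "\<forall>q. Suc T \<le> q \<and> q < TL \<longrightarrow> is_push (ys!q)"
      using tpo_eq_push[OF wf TT] TL o1 o2 toT qT by simp
    obtain pre where pre: "wkk ys TL = pre @ wkk ys (Suc T)" using wk_const[OF allp _ TT wf] TL by auto
    define jL where "jL = L - tpu ys TL - 1"
    define jx where "jx = aL + length pre"
    have W: "wkk ys (Suc TL) = [tpu ys TL + 1..<tpu ys TL + aL + 1] @ pre @ [x..<tpu ys T + a' + 1] @ wkk ys T"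
      using wTL pre wT b0 x1 by simp
    have jLa: "jL < aL" using TL tuTL by (simp add: jL_def)
    have wL: "wkk ys (Suc TL) ! jL = L" using W jLa TL by (simp add: jL_def nth_append)
    have wx: "wkk ys (Suc TL) ! jx = x" "jx < length (wkk ys (Suc TL))"
      using W T(3) b0 tuT x1 by (auto simp: jx_def nth_append)
    have jLx: "jL < jx" using jLa by (simp add: jx_def)
    have "pos P x < pos P L \<or> (\<forall>m \<le> jx - jL. pos P (wkk ys (Suc TL) ! (jL + m)) = pos P L + m)"
      using toolC'[OF wf _ jLx wx(2)] TL P wL wx by simp
    then show False
    proof
      assume "pos P x < pos P L" then show False using y1 y2 by simp
    next
      assume S: "\<forall>m \<le> jx - jL. pos P (wkk ys (Suc TL) ! (jL + m)) = pos P L + m"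
      have px: "pos P x = pos P L + (jx - jL)" using S wx jLx by (metis le_refl le_add_diff_inverse less_imp_le_nat)
      define m0 where "m0 = pos P y - pos P L"
      have m0: "1 \<le> m0" "m0 \<le> jx - jL" using y1 y2 px by (simp_all add: m0_def)
      have "pos P (wkk ys (Suc TL) ! (jL + m0)) = pos P L + m0" using S m0 by blast
      then have "pos P (wkk ys (Suc TL) ! (jL + m0)) = pos P y" using y1 by (simp add: m0_def)
      moreover have "wkk ys (Suc TL) ! (jL + m0) \<in> set P"
      proof -
        have "jL + m0 < length (wkk ys (Suc TL))" using m0 wx(2) jLx by simp
        then have "wkk ys (Suc TL) ! (jL + m0) \<in> set (wkk ys (Suc TL))" by simp
        then have "1 \<le> wkk ys (Suc TL) ! (jL + m0) \<and> wkk ys (Suc TL) ! (jL + m0) \<le> tpu ys (Suc TL)"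
          using wk_bound[OF wf, of "Suc TL"] TL by simp
        moreover have "tpu ys (Suc TL) \<le> seq_size ys" using INV_D(5)[OF wf, of "Suc TL"] TL by simp
        ultimately show ?thesis using produced_set[OF wf] n P by auto
      qed
      moreover note yin
      ultimately have wy: "wkk ys (Suc TL) ! (jL + m0) = y" using pos_in[OF d] by metis
      show False
      proof (cases "jL + m0 < aL")
        case True
        have j1: "jL + 1 < aL" using True m0 by simp
        have "wkk ys (Suc TL) ! (jL + 1) = tpu ys TL + 1 + (jL + 1)" using wTL j1 by (simp add: nth_append)
        then have "wkk ys (Suc TL) ! (jL + 1) = Suc L" using TL by (simp add: jL_def)
        then have "pos P (Suc L) = pos P L + 1" using S m0 by (metis le_trans)
        then show False using y3 y1 by simp
      next
        case False
        have "wkk ys (Suc TL) ! (jL + m0) = wkk ys TL ! (jL + m0 - aL)" using wTL False by (simp add: nth_append)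
        moreover have "jL + m0 - aL < length (wkk ys TL)" using wTL False m0 wx(2) jLx by simp
        ultimately have "y \<in> set (wkk ys TL)" using wy by (metis nth_mem)
        then have "y \<le> tpu ys TL" using wk_bound[OF wf] TL by auto
        then show False using TL yL by simp
      qed
    qed
  qed
  have "a' = Suc L - x" using M1 M2 tuT b0 x1 by simp
  then show ?thesis using T b0 qT by blast
qed




theorem mainTheorem10:
  fixes xs :: opseq and i :: nat
  assumes "well_formed xs" and "reduced xs"
    and "i < length xs" and "is_push (xs!i)"
    and "\<not> (\<exists>s t. corr_pops xs i = {s..<t})"
  shows "fixed_op xs i"
proof -
  note wf = assms(1) and red = assms(2) and il = assms(3) and ip = assms(4) and ni = assms(5)
  obtain a where xi: "xs!i = Push a" using ip by (cases "xs!i") auto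
  define n where "n = seq_size xs"
  define P where "P = produced xs"
  define x where "x = tpu xs i + 1"
  define L where "L = tpu xs i + a"
  define Q where "Q = tpo xs i"
  have d: "distinct P" using produced_distinct[OF wf] P_def by simp
  have setP: "set P = {1..n}" using produced_set[OF wf] P_def n_def by simp
  have a1: "1 \<le> a" using push_size_pos[OF wf il xi] .
  have wi1: "wkk xs (Suc i) = [x..<L+1] @ wkk xs i" "tpu xs (Suc i) = L" "tpo xs (Suc i) = Q"
    using wkk_push[OF wf il xi] by (simp_all add: x_def L_def Q_def)
  have B: "support xs i = {x..L}" using support_push[OF wf il xi] by (simp add: x_def L_def)
  have corr: "corr_pops xs i = {j. j < length xs \<and> \<not> is_push (xs!j) \<and> support xs j \<inter> {x..L} \<noteq> {}}"
    unfolding corr_pops_def B ..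
  have fin: "finite (corr_pops xs i)" unfolding corr by simp
  obtain j1 m j2 where jm: "j1 \<in> corr_pops xs i" "j2 \<in> corr_pops xs i" "j1 < m" "m < j2" "m \<notin> corr_pops xs i"
    using nonint[OF fin ni] by blast
  define j2' where "j2' = (LEAST j. j \<in> corr_pops xs i \<and> m < j)"
  have j2'c: "j2' \<in> corr_pops xs i" "m < j2'" using LeastI[of "\<lambda>j. j \<in> corr_pops xs i \<and> m < j" j2] jm
    unfolding j2'_def by auto
  have j2'min: "\<And>j. j \<in> corr_pops xs i \<Longrightarrow> m < j \<Longrightarrow> j2' \<le> j" unfolding j2'_def by (simp add: Least_le)
  obtain b1 where j1: "j1 < length xs" "\<not> is_push (xs!j1)" "b1 \<in> support xs j1" "x \<le> b1" "b1 \<le> L"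
    using jm(1) unfolding corr by auto
  obtain b2 where j2: "j2' < length xs" "\<not> is_push (xs!j2')" "b2 \<in> support xs j2'" "x \<le> b2" "b2 \<le> L"
    using j2'c(1) unfolding corr by auto
  obtain c1 where c1: "xs!j1 = Pop c1" using j1(2) by (cases "xs!j1") auto
  obtain c2 where c2: "xs!j2' = Pop c2" using j2(2) by (cases "xs!j2'") auto
  have ij1: "i < j1"
  proof (rule ccontr)
    assume "\<not> ?thesis"
    then have "tpu xs j1 \<le> tpu xs i" using tpu_mono by simp
    moreover have "b1 \<in> set (wkk xs j1)" using support_pop_out(2)[OF wf j1(1) c1 j1(3)] .
    then have "b1 \<le> tpu xs j1" using wk_bound[OF wf] j1 by auto
    ultimately show False using j1(4) x_def by simp
  qed
  define ps where "ps = j2' - 1"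
  have ps: "j1 < ps" "Suc ps = j2'" "m \<le> ps" using jm j2'c by (auto simp: ps_def)
  have psl: "ps < length xs" using ps j2 by simp
  have psnc: "ps \<notin> corr_pops xs i"
  proof (cases "ps = m")
    case True then show ?thesis using jm by simp
  next
    case False
    then have "m < ps" using ps by simp
    then show ?thesis using j2'min ps by fastforce
  qed
  have pspop: "\<not> is_push (xs!ps)"
  proof
    assume pp: "is_push (xs!ps)"
    then have rr: "xs!ps = Push 1 \<and> xs!j2' = Pop 1"
      using red ps j2 unfolding reduced_def by metis
    have "wkk xs j2' = [tpu xs ps + 1..<tpu xs ps + 1 + 1] @ wkk xs ps"
      using wkk_push(1)[OF wf psl] rr ps by simp
    then have "support xs j2' = {tpu xs ps + 1}" using support_pop[of xs j2'] rr by simp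
    moreover have "L \<le> tpu xs ps" using tpu_mono[of "Suc i" ps xs] wi1 ps ij1 by simp
    ultimately show False using j2 by simp
  qed
  obtain bs where bs: "xs!ps = Pop bs" using pspop by (cases "xs!ps") auto
  have "1 \<le> bs" using pop_size_pos[OF wf psl bs] .
  moreover have "tpo xs (Suc ps) \<le> tpu xs (Suc ps)" using wf_prefix[OF wf] psl by simp
  then have "bs \<le> length (wkk xs ps)" using wkk_pop[OF psl bs] INV_D(2)[OF wf, of ps] psl by simp
  ultimately have "take bs (wkk xs ps) \<noteq> []" by auto
  then obtain y where yS: "y \<in> support xs ps"
    using support_pop[OF bs] hd_in_set by metis
  have yB: "\<not> (x \<le> y \<and> y \<le> L)" using psnc yS psl pspop unfolding corr by auto
  have si: "Suc i < length xs" using ij1 ps psl by simp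
  have sip: "is_push (xs!(Suc i))"
  proof (rule ccontr)
    assume H: "\<not> ?thesis"
    then have "xs!i = Push 1" using red si ip unfolding reduced_def by blast
    then have "a = 1" using xi by simp
    then have "b1 = x" "b2 = x" using j1 j2 L_def x_def by simp_all
    then show False using popped_once[OF wf _ j2(1) c1 c2] j1(3) j2(3) jm j2'c by simp
  qed
  obtain a2 where a2: "xs!(Suc i) = Push a2" using sip by (cases "xs!(Suc i)") auto
  have wi2: "wkk xs (Suc (Suc i)) = [Suc L..<Suc L + a2] @ wkk xs (Suc i)" "tpu xs (Suc (Suc i)) = L + a2"
    using wkk_push[OF wf si a2] wi1 by (simp_all add: add.commute add.left_commute)
  have a21: "1 \<le> a2" using push_size_pos[OF wf si a2] .
  have j1ss: "Suc (Suc i) \<le> j1"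
  proof (rule ccontr)
    assume "\<not> ?thesis" then have "j1 = Suc i" using ij1 by simp
    then show False using j1(2) sip by simp
  qed
  have b1o: "b1 \<in> set (outk xs ps)"
    using support_pop_out(1)[OF wf j1(1) c1 j1(3)] out_mono[OF wf, of "Suc j1" ps] ps psl by auto
  have yo1: "y \<in> set (outk xs (Suc ps))" and yo2: "y \<notin> set (outk xs ps)"
    using support_pop_out[OF wf psl bs yS] by simp_all
  have b2o: "b2 \<notin> set (outk xs (Suc ps))" using support_pop_out(3)[OF wf j2(1) c2 j2(3)] ps by simp
  have lw1: "length (wkk xs (Suc i)) \<ge> L + 1 - x" using wi1 by simp
  have w1n: "\<And>r. r < L + 1 - x \<Longrightarrow> wkk xs (Suc i) ! r = x + r" using wi1 by (simp add: nth_append)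
  have ips: "Suc i \<le> ps" "Suc ps \<le> length xs" "ps \<le> length xs" using ij1 ps psl by auto
  have xo: "x \<in> set (outk xs ps)"
  proof (cases "b1 = x")
    case True then show ?thesis using b1o by simp
  next
    case False
    have "wkk xs (Suc i) ! 0 \<in> set (outk xs ps)"
      using LIFO[OF wf ips(1) ips(3), of 0 "b1 - x"] w1n[of 0] w1n[of "b1 - x"] j1 False lw1 b1o by simp
    then show ?thesis using w1n[of 0] j1 by simp
  qed
  have Lo: "L \<notin> set (outk xs (Suc ps))"
  proof
    assume H: "L \<in> set (outk xs (Suc ps))"
    show False
    proof (cases "b2 = L")
      case True then show False using H b2o by simp
    next
      case False
      have "wkk xs (Suc i) ! (b2 - x) \<in> set (outk xs (Suc ps))"
        using LIFO[OF wf _ ips(2), of "Suc i" "b2 - x" "L - x"] w1n[of "b2 - x"] w1n[of "L - x"] j2 False lw1 H ips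
        by simp
      then show False using w1n[of "b2 - x"] j2 b2o by simp
    qed
  qed
  have zo: "Suc L \<in> set (outk xs ps)"
  proof -
    have A: "wkk xs (Suc (Suc i)) ! (a2 + (b1 - x)) = b1" using wi2 w1n[of "b1 - x"] j1 by (auto simp: nth_append)
    have Z: "wkk xs (Suc (Suc i)) ! 0 = Suc L" using wi2 a21 by (simp add: nth_append)
    have ln: "a2 + (b1 - x) < length (wkk xs (Suc (Suc i)))" using wi2 lw1 j1 by simp
    have "Suc (Suc i) \<le> ps" using j1ss ps by simp
    then show ?thesis using LIFO[OF wf _ ips(3), of "Suc (Suc i)" 0 "a2 + (b1 - x)"] A Z ln a21 b1o by simp
  qed
  have below: "\<And>v. v \<in> set (wkk xs i) \<Longrightarrow> v \<notin> set (outk xs (Suc ps))"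
  proof -
    fix v assume v: "v \<in> set (wkk xs i)"
    then obtain r where r: "r < length (wkk xs i)" "wkk xs i ! r = v" by (metis in_set_conv_nth)
    have A: "wkk xs (Suc i) ! (L + 1 - x + r) = v" using wi1 r by (simp add: nth_append)
    have ln: "L + 1 - x + r < length (wkk xs (Suc i))" using wi1 r by simp
    show "v \<notin> set (outk xs (Suc ps))"
    proof
      assume "v \<in> set (outk xs (Suc ps))"
      then have "wkk xs (Suc i) ! (b2 - x) \<in> set (outk xs (Suc ps))"
        using LIFO[OF wf _ ips(2), of "Suc i" "b2 - x" "L + 1 - x + r"] A ln j2 ips by simp
      then show False using w1n[of "b2 - x"] j2 b2o by simp
    qed
  qed
  have outi: "set (outk xs i) \<subseteq> set (outk xs ps)" using out_mono[OF wf, of i ps] ips by simp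
  have wiset: "\<And>v. 1 \<le> v \<Longrightarrow> v \<le> tpu xs i \<Longrightarrow> v \<notin> set (outk xs i) \<Longrightarrow> v \<in> set (wkk xs i)"
    using INV_D(7)[OF wf, of i] il by auto
  have yP: "y \<in> set P"
  proof -
    have "y \<in> set (outk xs (Suc ps))" by (rule yo1)
    then show ?thesis using outk_drop[OF wf ips(2)] P_def by (metis in_set_dropD)
  qed
  have yL: "L < y"
  proof (rule ccontr)
    assume "\<not> ?thesis"
    then have yx: "y < x" using yB by simp
    have "1 \<le> y" using yP setP by simp
    moreover have "y \<notin> set (outk xs i)" using yo2 outi by blast
    ultimately have "y \<in> set (wkk xs i)" using wiset yx x_def by simp
    then show False using below yo1 by blast
  qed
  have Ln: "L < n"
  proof -
    have "tpu xs (Suc (Suc i)) \<le> seq_size xs" using INV_D(5)[OF wf, of "Suc (Suc i)"] si by simp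
    then show ?thesis using wi2 a21 n_def by simp
  qed
  have inP: "\<And>v. 1 \<le> v \<Longrightarrow> v \<le> n \<Longrightarrow> v \<in> set P" using setP by simp
  have x1: "1 \<le> x" using x_def by simp
  have xL: "x \<le> L" using x_def L_def a1 by simp
  have y1: "pos P L < pos P y"
    using pop_order[OF wf ips(2) yo1, of L] Lo inP[of L] xL x1 Ln P_def by simp
  have y2: "pos P y < pos P x"
    using pop_order[OF wf ips(3) xo, of y] yo2 yP P_def by simp
  have y3: "pos P y < pos P (Suc L)"
    using pop_order[OF wf ips(3) zo, of y] yo2 yP P_def by simp
  have oi: "outk xs i = drop (n - Q) P" using outk_drop[OF wf, of i] il n_def Q_def P_def by simp
  have y4: "1 < x \<Longrightarrow> (\<forall>p. n - Q \<le> p \<and> p < n \<longrightarrow> P!p \<noteq> x - 1) \<Longrightarrow> pos P (x - 1) < pos P y"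
  proof -
    assume x2: "1 < x" and nd: "\<forall>p. n - Q \<le> p \<and> p < n \<longrightarrow> P!p \<noteq> x - 1"
    have "x - 1 \<notin> set (outk xs i)"
    proof
      assume "x - 1 \<in> set (outk xs i)"
      then obtain q where "q < length (drop (n - Q) P)" "drop (n - Q) P ! q = x - 1" using oi by (metis in_set_conv_nth)
      moreover have "length P = n" using produced_len[OF wf] P_def n_def by simp
      ultimately show False using nd by auto
    qed
    then have "x - 1 \<in> set (wkk xs i)" using wiset[of "x - 1"] x2 x_def by simp
    then have "x - 1 \<notin> set (outk xs (Suc ps))" using below by blast
    moreover have "x - 1 \<in> set P" using inP[of "x - 1"] x2 xL Ln by simp
    ultimately show ?thesis using pop_order[OF wf ips(2) yo1, of "x - 1"] P_def by simp
  qed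
  obtain p1 where p1: "i < p1" "p1 < length xs" "xs!p1 = Pop 1" "outk xs (Suc p1) = tpu xs p1 # outk xs i"
      "tpu xs (Suc i) \<le> tpu xs p1"
    using first_pop[OF wf red il xi] by blast
  have p1s: "Suc (Suc i) \<le> p1"
  proof (rule ccontr)
    assume "\<not> ?thesis" then have "p1 = Suc i" using p1 by simp
    then show False using p1 sip by simp
  qed
  have gL: "L < tpu xs p1" using tpu_mono[OF p1s, of xs] wi2 a21 by simp
  have l1: "length (outk xs (Suc p1)) = Suc Q" using p1(4) INV_D(3)[OF wf, of i] il Q_def by simp
  have to1: "tpo xs (Suc p1) = Suc Q" using l1 INV_D(3)[OF wf, of "Suc p1"] p1 by simp
  have Qn: "Q < n"
  proof -
    have "tpo xs (Suc p1) \<le> tpu xs (Suc p1)" "tpu xs (Suc p1) \<le> seq_size xs"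
      using INV_D(4,5)[OF wf, of "Suc p1"] p1 by simp_all
    then show ?thesis using to1 n_def by simp
  qed
  have g: "L < P ! (n - Q - 1)"
  proof -
    have "outk xs (Suc p1) = drop (n - Suc Q) P" using outk_drop[OF wf, of "Suc p1"] p1 to1 n_def P_def by simp
    moreover have "n - Suc Q < length P" using produced_len[OF wf] P_def n_def Qn by simp
    ultimately have "P ! (n - Suc Q) = tpu xs p1" using p1(4) by (metis hd_drop_conv_nth list.sel(1))
    then show ?thesis using gL by simp
  qed
  have Dsmall: "\<forall>p. n - Q \<le> p \<and> p < n \<longrightarrow> P!p < x"
  proof (intro allI impI)
    fix p assume p: "n - Q \<le> p \<and> p < n"
    then have "P!p \<in> set (outk xs i)" using in_out_idx[OF wf, of i p] il n_def Q_def P_def by simp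
    then show "P!p < x" using out_bound[OF wf, of i] il x_def by fastforce
  qed
  show ?thesis unfolding fixed_op_def
  proof (intro allI impI)
    fix ys assume H: "reduced ys \<and> equivalent ys xs"
    have wfy: "well_formed ys" and ny: "seq_size ys = n" and Py: "produced ys = P"
      using H unfolding equivalent_def n_def P_def by auto
    obtain T where T: "T < length ys" "ys!T = Push (Suc L - x)" "tpu ys T = x - 1" "tpo ys T = Q"
      using ys_part[OF wfy _ ny Py x1 xL Ln Qn Dsmall g yL yP y1 y2 y3 y4] H by blast
    have "tpu ys (Suc T) = L" using wkk_push(3)[OF wfy T(1) T(2)] T xL x1 by simp
    moreover have "tpo ys (Suc T) = Q" using wkk_push(4)[OF wfy T(1) T(2)] T by simp
    ultimately have "vertex ys T = vertex xs i \<and> vertex ys (Suc T) = vertex xs (Suc i)"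
      using T wi1 by (simp add: vertex_eq x_def Q_def)
    then show "\<exists>j<length ys. vertex ys j = vertex xs i \<and> vertex ys (Suc j) = vertex xs (Suc i)"
      using T(1) by blast
  qed
qed


end
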